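(* Let $E$ be a disjunctive interval multiplicity expression (DIME) over a finite alphabet $\Sigma$ and let $w$ be an unordered word over $\Sigma$. Then $w\in L(E)$ if and only if $w\models \Delta_E$.
   Context: Unordered words are functions $w:\Sigma\to\mathbb{N}_0$; $a\in w$ means $w(a)\neq 0$; $\varepsilon$ is the all-zero word; unordered concatenation $\uplus$ is multiset union, extended to languages pointwise. An interval is $[n,m]$ or $[n,m]^?$ with $n\in\mathbb{N}_0$, $m\in\mathbb{N}_0\cup\{\infty\}$; $L(E^{[n,m]})=\{w_1\uplus\dots\uplus w_i\mid n\le i\le m, w_j\in L(E)\}$, $L(E^{[n,m]^?})=L(E^{[n,m]})\cup\{\varepsilon\}$; the multiplicities $*,+,?,1$ denote $[0,\infty],[1,\infty],[0,1],[1,1]$. Also $L(a)=\{a\}$, $L(E_1\mid E_2)=L(E_1)\cup L(E_2)$, $L(E_1\mathbin{|\hspace{-0.1em}|} E_2)=L(E_1)\uplus L(E_2)$. An atom is $(a_1^{I_1}\mathbin{|\hspace{-0.1em}|}\dots\mathbin{|\hspace{-0.1em}|} a_k^{I_k})$ with $a_i\in\Sigma$ and each $I_i\in\{?,1\}$. A clause is $(A_1^{I_1}\mid\dots\mid A_k^{I_k})$ with atoms $A_i$ and intervals $I_i$; it is simple if each $I_i\in\{?,1\}$. A DIME is $(D_1^{I_1}\mathbin{|\hspace{-0.1em}|}\dots\mathbin{|\hspace{-0.1em}|} D_k^{I_k})$ where for each $i$ either $D_i$ is a simple clause and $I_i\in\{+,*\}$, or $D_i$ is a clause and $I_i\in\{1,?\}$;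 moreover each symbol of $\Sigma$ occurs at most once in the DIME. The characterizing tuple of $E$ is $\Delta_E=(C_E,N_E,P_E,K_E)$ where $C_E=\{(a,b)\in\Sigma\times\Sigma\mid \neg\exists w\in L(E).\ a\in w\wedge b\in w\}$, $N_E=\{(a,w(a))\mid a\in\Sigma, w\in L(E)\}$, $P_E=\{X\subseteq\Sigma\mid\forall w\in L(E).\ \exists a\in X.\ a\in w\}$, $K_E=\{(a,b)\in\Sigma\times\Sigma\mid\forall w\in L(E).\ w(a)\ge w(b)\}$. An unordered word $w$ satisfies $\Delta_E$, written $w\models\Delta_E$, if: (1) for all $(a,b)\in C_E$, not both $a\in w$ and $b\in w$; (2) for all $a\in\Sigma$, $(a,w(a))\in N_E$; (3) for all $X\in P_E$ there is $a\in X$ with $a\in w$; (4) for all $(a,b)\in K_E$, $w(a)\ge w(b)$. *)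

theory Defs
  imports Main "HOL-Library.Extended_Nat"
begin

text \<open>Unordered words over alphabet 'a: functions 'a \<Rightarrow> nat.\<close>
type_synonym 'a uword = "'a \<Rightarrow> nat"

definition uempty :: "'a uword" where "uempty = (\<lambda>_. 0)"

definition uconc :: "'a uword \<Rightarrow> 'a uword \<Rightarrow> 'a uword" where
  "uconc u v = (\<lambda>a. u a + v a)"

definition lconc :: "'a uword set \<Rightarrow> 'a uword set \<Rightarrow> 'a uword set" where
  "lconc A B = {uconc u v | u v. u \<in> A \<and> v \<in> B}"

fun lpow :: "nat \<Rightarrow> 'a uword set \<Rightarrow> 'a uword set" where
  "lpow 0 A = {uempty}"
| "lpow (Suc i) A = lconc A (lpow i A)"

text \<open>Intervals: Intv n m q stands for [n,m] (q = False) or [n,m]^? (q = True).\<close>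
datatype interval = Intv nat enat bool

definition iv_star :: interval where "iv_star = Intv 0 \<infinity> False"
definition iv_plus :: interval where "iv_plus = Intv 1 \<infinity> False"
definition iv_opt  :: interval where "iv_opt  = Intv 0 1 False"
definition iv_one  :: interval where "iv_one  = Intv 1 1 False"

datatype 'a uexp = Sym 'a | Disj "'a uexp list" | Conc "'a uexp list" | Mult "'a uexp" interval

fun lang :: "'a uexp \<Rightarrow> 'a uword set" where
  "lang (Sym a) = {(\<lambda>b. if b = a then 1 else 0)}"
| "lang (Disj Es) = (\<Union>E\<in>set Es. lang E)"
| "lang (Conc Es) = foldr (\<lambda>E L. lconc (lang E) L) Es {uempty}"
| "lang (Mult E (Intv n m q)) =
     {w. \<exists>i::nat. n \<le> i \<and> enat i \<le> m \<and> w \<in> lpow i (lang E)} \<union> (if q then {uempty} else {})"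

fun syms :: "'a uexp \<Rightarrow> 'a list" where
  "syms (Sym a) = [a]"
| "syms (Disj Es) = concat (map syms Es)"
| "syms (Conc Es) = concat (map syms Es)"
| "syms (Mult E I) = syms E"

definition is_atom :: "'a uexp \<Rightarrow> bool" where
  "is_atom A \<longleftrightarrow> (\<exists>xs. xs \<noteq> [] \<and> A = Conc (map (\<lambda>(a, I). Mult (Sym a) I) xs)
                     \<and> (\<forall>(a, I)\<in>set xs. I \<in> {iv_opt, iv_one}))"

definition is_clause :: "'a uexp \<Rightarrow> bool" where
  "is_clause D \<longleftrightarrow> (\<exists>xs. xs \<noteq> [] \<and> D = Disj (map (\<lambda>(A, I). Mult A I) xs)
                     \<and> (\<forall>(A, I)\<in>set xs. is_atom A))"

definition is_simple_clause :: "'a uexp \<Rightarrow> bool" where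
  "is_simple_clause D \<longleftrightarrow> (\<exists>xs. xs \<noteq> [] \<and> D = Disj (map (\<lambda>(A, I). Mult A I) xs)
                     \<and> (\<forall>(A, I)\<in>set xs. is_atom A \<and> I \<in> {iv_opt, iv_one}))"

definition is_dime :: "'a uexp \<Rightarrow> bool" where
  "is_dime E \<longleftrightarrow> (\<exists>xs. xs \<noteq> [] \<and> E = Conc (map (\<lambda>(D, I). Mult D I) xs)
                     \<and> (\<forall>(D, I)\<in>set xs. (is_simple_clause D \<and> I \<in> {iv_plus, iv_star})
                                        \<or> (is_clause D \<and> I \<in> {iv_one, iv_opt})))
                 \<and> distinct (syms E)"

text \<open>Characterizing tuple (Sigma = UNIV of the finite alphabet type).\<close>
definition C_of :: "'a uexp \<Rightarrow> ('a \<times> 'a) set" where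
  "C_of E = {(a, b). \<not> (\<exists>w\<in>lang E. w a \<noteq> 0 \<and> w b \<noteq> 0)}"

definition N_of :: "'a uexp \<Rightarrow> ('a \<times> nat) set" where
  "N_of E = {(a, w a) | a w. w \<in> lang E}"

definition P_of :: "'a uexp \<Rightarrow> 'a set set" where
  "P_of E = {X. \<forall>w\<in>lang E. \<exists>a\<in>X. w a \<noteq> 0}"

definition K_of :: "'a uexp \<Rightarrow> ('a \<times> 'a) set" where
  "K_of E = {(a, b). \<forall>w\<in>lang E. w a \<ge> w b}"

definition sat :: "'a uword \<Rightarrow> 'a uexp \<Rightarrow> bool" where
  "sat w E \<longleftrightarrow>
     (\<forall>(a, b)\<in>C_of E. \<not> (w a \<noteq> 0 \<and> w b \<noteq> 0)) \<and>
     (\<forall>a. (a, w a) \<in> N_of E) \<and>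
     (\<forall>X\<in>P_of E. \<exists>a\<in>X. w a \<noteq> 0) \<and>
     (\<forall>(a, b)\<in>K_of E. w a \<ge> w b)"

end

theory Submission
  imports Defs
begin

definition satL :: "'a uword set \<Rightarrow> 'a uword \<Rightarrow> bool" where
"satL L w \<longleftrightarrow> (\<forall>a b. (\<forall>v\<in>L. \<not>(v a \<noteq> 0 \<and> v b \<noteq> 0)) \<longrightarrow> \<not>(w a \<noteq> 0 \<and> w b \<noteq> 0))
   \<and> (\<forall>a. \<exists>v\<in>L. v a = w a)
   \<and> (\<forall>X. (\<forall>v\<in>L. \<exists>a\<in>X. v a \<noteq> 0) \<longrightarrow> (\<exists>a\<in>X. w a \<noteq> 0))
   \<and> (\<forall>a b. (\<forall>v\<in>L. v b \<le> v a) \<longrightarrow> w b \<le> w a)"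

lemma sat_eq: "sat w E = satL (lang E) w"
proof -
  have 1: "(\<forall>(a, b)\<in>C_of E. \<not> (w a \<noteq> 0 \<and> w b \<noteq> 0)) = (\<forall>a b. (\<forall>v\<in>lang E. \<not>(v a \<noteq> 0 \<and> v b \<noteq> 0)) \<longrightarrow> \<not>(w a \<noteq> 0 \<and> w b \<noteq> 0))"
    unfolding C_of_def by auto
  have 2: "(\<forall>a. (a, w a) \<in> N_of E) = (\<forall>a. \<exists>v\<in>lang E. v a = w a)"
    unfolding N_of_def by (auto; metis)
  have 3: "(\<forall>X\<in>P_of E. \<exists>a\<in>X. w a \<noteq> 0) = (\<forall>X. (\<forall>v\<in>lang E. \<exists>a\<in>X. v a \<noteq> 0) \<longrightarrow> (\<exists>a\<in>X. w a \<noteq> 0))"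
    unfolding P_of_def by auto
  have 4: "(\<forall>(a, b)\<in>K_of E. w a \<ge> w b) = (\<forall>a b. (\<forall>v\<in>lang E. v b \<le> v a) \<longrightarrow> w b \<le> w a)"
    unfolding K_of_def by auto
  show ?thesis unfolding sat_def satL_def by (simp only: 1 2 3 4)
qed

lemma mem_satL: "w \<in> L \<Longrightarrow> satL L w"
  unfolding satL_def by auto

lemma satL_C: "satL L w \<Longrightarrow> (\<And>v. v\<in>L \<Longrightarrow> \<not>(v a \<noteq> 0 \<and> v b \<noteq> 0)) \<Longrightarrow> \<not>(w a \<noteq> 0 \<and> w b \<noteq> 0)"
  unfolding satL_def by blast
lemma satL_N: "satL L w \<Longrightarrow> \<exists>v\<in>L. v a = w a"
  unfolding satL_def by blast
lemma satL_P: "satL L w \<Longrightarrow> (\<And>v. v\<in>L \<Longrightarrow> \<exists>a\<in>X. v a \<noteq> 0) \<Longrightarrow> (\<exists>a\<in>X. w a \<noteq> 0)"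
  unfolding satL_def by blast
lemma satL_K: "satL L w \<Longrightarrow> (\<And>v. v\<in>L \<Longrightarrow> v b \<le> v a) \<Longrightarrow> w b \<le> w a"
  unfolding satL_def by blast

lemma uempty_apply: "uempty a = 0" by (simp add: uempty_def)
lemma uconc_apply: "uconc u v a = u a + v a" by (simp add: uconc_def)
lemma uempty_iff: "(w = uempty) = (\<forall>a. w a = 0)" by (auto simp: uempty_def)

lemma satL_empty: "satL (L::'a uword set) uempty \<Longrightarrow> uempty \<in> L"
proof -
  assume s: "satL L uempty"
  have "\<not> (\<forall>v\<in>L. \<exists>a\<in>UNIV. v a \<noteq> 0)"
  proof
    assume h: "\<forall>v\<in>L. \<exists>a\<in>UNIV. v a \<noteq> 0"
    have "\<exists>a\<in>(UNIV::'a set). uempty a \<noteq> (0::nat)"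
      using satL_P[OF s, of UNIV] h by blast
    then show False by (simp add: uempty_apply)
  qed
  then obtain v where "v \<in> L" "\<forall>a. v a = 0" by auto
  moreover have "v = uempty" using \<open>\<forall>a. v a = 0\<close> by (simp add: uempty_iff)
  ultimately show ?thesis by simp
qed

lemma lconc_mem: "x \<in> lconc A B \<longleftrightarrow> (\<exists>u\<in>A. \<exists>v\<in>B. x = uconc u v)"
  unfolding lconc_def by auto

lemma uconc_empty[simp]: "uconc u uempty = u" "uconc uempty u = u"
  by (auto simp: uconc_def uempty_def)
lemma uconc_comm: "uconc u v = uconc v u" by (auto simp: uconc_def)
lemma uconc_assoc: "uconc (uconc u v) x = uconc u (uconc v x)" by (auto simp: uconc_def)

lemma lconc_comm: "lconc A B = lconc B A"
proof -
  have "lconc A B \<subseteq> lconc B A" for A B :: "'a uword set"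
  proof
    fix x assume "x \<in> lconc A B"
    then obtain u v where "u \<in> A" "v \<in> B" "x = uconc u v" by (auto simp: lconc_mem)
    then show "x \<in> lconc B A" unfolding lconc_mem using uconc_comm by blast
  qed
  then show ?thesis by blast
qed

lemma lpow_one: "lpow 1 L = L"
  by (auto simp: lconc_def)

lemma lpow_add: "v1 \<in> lpow i L \<Longrightarrow> v2 \<in> lpow j L \<Longrightarrow> uconc v1 v2 \<in> lpow (i+j) L"
proof (induction i arbitrary: v1)
  case 0 then show ?case by simp
next
  case (Suc i)
  then obtain x y where "x \<in> L" "y \<in> lpow i L" "v1 = uconc x y" by (auto simp: lconc_mem)
  have "uconc y v2 \<in> lpow (i+j) L" using Suc.IH[of y] Suc.prems \<open>y \<in> lpow i L\<close> by blast
  then have "uconc x (uconc y v2) \<in> lpow (Suc (i+j)) L" using \<open>x \<in> L\<close> by (auto simp: lconc_mem)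
  then show ?case using \<open>v1 = uconc x y\<close> by (simp add: uconc_assoc)
qed

lemma lpow_mono: "L1 \<subseteq> L2 \<Longrightarrow> lpow i L1 \<subseteq> lpow i L2"
  by (induction i) (auto simp: lconc_def)

definition supp :: "'a uword set \<Rightarrow> 'a set \<Rightarrow> bool" where
  "supp L S \<longleftrightarrow> (\<forall>v\<in>L. \<forall>a. a \<notin> S \<longrightarrow> v a = 0)"

lemma supp_lconc: "supp A S \<Longrightarrow> supp B T \<Longrightarrow> supp (lconc A B) (S \<union> T)"
  unfolding supp_def lconc_def by (auto simp: uconc_apply)

lemma supp_lpow: "supp A S \<Longrightarrow> supp (lpow i A) S"
proof (induction i)
  case 0 then show ?case by (simp add: supp_def uempty_apply)
next
  case (Suc i) then show ?case using supp_lconc[of A S "lpow i A" S] by simp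
qed

lemma lang_supp: "supp (lang E) (set (syms E))"
proof (induction E)
  case (Sym x) then show ?case by (simp add: supp_def)
next
  case (Disj Es) then show ?case by (fastforce simp: supp_def)
next
  case (Conc Es)
  have "supp (foldr (\<lambda>E L. lconc (lang E) L) Es {uempty}) (set (concat (map syms Es)))"
    using Conc
  proof (induction Es)
    case Nil then show ?case by (simp add: supp_def uempty_apply)
  next
    case (Cons E Es)
    have "supp (lang E) (set (syms E))" using Cons.prems by simp
    moreover have "supp (foldr (\<lambda>E L. lconc (lang E) L) Es {uempty}) (set (concat (map syms Es)))"
      using Cons by simp
    ultimately show ?case using supp_lconc by fastforce
  qed
  then show ?case by simp
next
  case (Mult E I)
  then show ?case
  proof (cases I)
    case (Intv n m q)
    have "supp (lpow i (lang E)) (set (syms E))" for i using Mult supp_lpow by blast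
    then show ?thesis using Intv by (auto simp: supp_def uempty_apply)
  qed
qed

definition restr :: "'a set \<Rightarrow> 'a uword \<Rightarrow> 'a uword" where
  "restr S u = (\<lambda>a. if a \<in> S then u a else 0)"

lemma lconc_split:
  assumes "v \<in> lconc L1 L2" "supp L1 S" "supp L2 (-S)"
  obtains v1 v2 where "v1 \<in> L1" "v2 \<in> L2" "v = uconc v1 v2"
    "\<And>a. a \<in> S \<Longrightarrow> v a = v1 a" "\<And>a. a \<notin> S \<Longrightarrow> v1 a = 0"
proof -
  obtain v1 v2 where 1: "v1 \<in> L1" "v2 \<in> L2" "v = uconc v1 v2" using assms(1) by (auto simp: lconc_mem)
  have "\<And>a. a \<in> S \<Longrightarrow> v a = v1 a" using 1 assms(3) by (auto simp: supp_def uconc_apply)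
  moreover have "\<And>a. a \<notin> S \<Longrightarrow> v1 a = 0" using 1 assms(2) by (auto simp: supp_def)
  ultimately show ?thesis using that 1 by blast
qed

lemma satL_lconc_left:
  assumes s: "satL (lconc L1 L2) u" and h1: "supp L1 S" and h2: "supp L2 (-S)"
  shows "satL L1 (restr S u)"
  unfolding satL_def
proof (intro conjI allI impI)
  fix a b assume H: "\<forall>v\<in>L1. \<not> (v a \<noteq> 0 \<and> v b \<noteq> 0)"
  show "\<not> (restr S u a \<noteq> 0 \<and> restr S u b \<noteq> 0)"
  proof (cases "a \<in> S \<and> b \<in> S")
    case True
    have "\<not> (v a \<noteq> 0 \<and> v b \<noteq> 0)" if vv: "v \<in> lconc L1 L2" for v
    proof -
      obtain v1 v2 where "v1 \<in> L1" "\<And>a. a \<in> S \<Longrightarrow> v a = v1 a"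
        using lconc_split[OF vv h1 h2] by metis
      then show ?thesis using H True by auto
    qed
    then show ?thesis using satL_C[OF s] True by (auto simp: restr_def)
  next
    case False then show ?thesis by (auto simp: restr_def)
  qed
next
  fix a
  obtain v where "v \<in> lconc L1 L2" "v a = u a" using satL_N[OF s] by blast
  obtain v1 v2 where "v1 \<in> L1" "\<And>a. a \<in> S \<Longrightarrow> v a = v1 a" "\<And>a. a \<notin> S \<Longrightarrow> v1 a = 0"
    using lconc_split[OF \<open>v \<in> lconc L1 L2\<close> h1 h2] by metis
  then show "\<exists>v\<in>L1. v a = restr S u a" using \<open>v a = u a\<close>
    by (cases "a \<in> S") (auto simp: restr_def)
next
  fix X assume H: "\<forall>v\<in>L1. \<exists>a\<in>X. v a \<noteq> 0"
  have "\<exists>a\<in>X \<inter> S. v a \<noteq> 0" if vv: "v \<in> lconc L1 L2" for v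
  proof -
    obtain v1 v2 where "v1 \<in> L1" "\<And>a. a \<in> S \<Longrightarrow> v a = v1 a" "\<And>a. a \<notin> S \<Longrightarrow> v1 a = 0"
      using lconc_split[OF vv h1 h2] by metis
    then show ?thesis using H by fastforce
  qed
  then obtain a where "a \<in> X \<inter> S" "u a \<noteq> 0" using satL_P[OF s, of "X \<inter> S"] by blast
  then show "\<exists>a\<in>X. restr S u a \<noteq> 0" by (auto simp: restr_def)
next
  fix a b assume H: "\<forall>v\<in>L1. v b \<le> v a"
  show "restr S u b \<le> restr S u a"
  proof (cases "b \<in> S")
    case False then show ?thesis by (simp add: restr_def)
  next
    case bS: True
    show ?thesis
    proof (cases "a \<in> S")
      case True
      have "v b \<le> v a" if vv: "v \<in> lconc L1 L2" for v
      proof -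
        obtain v1 v2 where "v1 \<in> L1" "\<And>a. a \<in> S \<Longrightarrow> v a = v1 a"
          using lconc_split[OF vv h1 h2] by metis
        then show ?thesis using H True bS by auto
      qed
      then show ?thesis using satL_K[OF s] True bS by (auto simp: restr_def)
    next
      case False
      obtain v where "v \<in> lconc L1 L2" "v b = u b" using satL_N[OF s] by blast
      obtain v1 v2 where "v1 \<in> L1" "\<And>a. a \<in> S \<Longrightarrow> v a = v1 a" "\<And>a. a \<notin> S \<Longrightarrow> v1 a = 0"
        using lconc_split[OF \<open>v \<in> lconc L1 L2\<close> h1 h2] by metis
      then have "v1 b = 0" using H False by (metis le_zero_eq)
      then show ?thesis using \<open>v b = u b\<close> bS \<open>\<And>a. a \<in> S \<Longrightarrow> v a = v1 a\<close> by (simp add: restr_def)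
    qed
  qed
qed

lemma restr_split: "u = uconc (restr S u) (restr (-S) u)"
  by (auto simp: uconc_def restr_def)

lemma satL_single: "satL {uempty} u \<Longrightarrow> u = uempty"
  using satL_N[of "{uempty}" u] by (auto simp: uempty_iff uempty_apply)

lemma conc_closed:
  assumes "\<forall>F\<in>set Fs. \<forall>u. satL (lang F) u \<longrightarrow> u \<in> lang F"
    and "distinct (concat (map syms Fs))"
    and "satL (lang (Conc Fs)) u"
  shows "u \<in> lang (Conc Fs)"
  using assms
proof (induction Fs arbitrary: u)
  case Nil then show ?case using satL_single by simp
next
  case (Cons F Fs)
  let ?S = "set (syms F)"
  have L: "lang (Conc (F # Fs)) = lconc (lang F) (lang (Conc Fs))" by simp
  have h1: "supp (lang F) ?S" by (rule lang_supp)
  have "supp (lang (Conc Fs)) (set (syms (Conc Fs)))" by (rule lang_supp)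
  moreover have "set (syms (Conc Fs)) \<subseteq> - ?S" using Cons.prems(2) by auto
  ultimately have h2: "supp (lang (Conc Fs)) (- ?S)" unfolding supp_def by blast
  have s1: "satL (lang F) (restr ?S u)" using satL_lconc_left[OF _ h1 h2] Cons.prems(3) L by simp
  have h1': "supp (lang F) (- (- ?S))" using h1 by simp
  have s2: "satL (lang (Conc Fs)) (restr (- ?S) u)"
    using satL_lconc_left[OF _ h2 h1'] Cons.prems(3) L lconc_comm by metis
  have "restr ?S u \<in> lang F" using s1 Cons.prems(1) by simp
  moreover have "restr (- ?S) u \<in> lang (Conc Fs)" using Cons.IH[OF _ _ s2] Cons.prems by simp
  ultimately show ?case using restr_split[of u ?S] L by (metis lconc_mem)
qed

definition APow :: "nat \<Rightarrow> 'a set \<Rightarrow> 'a set \<Rightarrow> 'a uword set" where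
  "APow i M Op = {v. (\<forall>a\<in>M. v a = i) \<and> (\<forall>a\<in>Op. v a \<le> i) \<and> (\<forall>a. a \<notin> M \<and> a \<notin> Op \<longrightarrow> v a = 0)}"

lemma lpow_APow: "lpow i (APow 1 M Op) = APow i M Op"
proof (induction i)
  case 0
  have "v \<in> APow 0 M Op \<longleftrightarrow> v = uempty" for v
  proof
    assume "v \<in> APow 0 M Op"
    then have "v a = 0" for a unfolding APow_def by (cases "a \<in> M"; cases "a \<in> Op") auto
    then show "v = uempty" by (simp add: uempty_iff)
  qed (simp add: APow_def uempty_apply)
  then show ?case by auto
next
  case (Suc i)
  have "lconc (APow 1 M Op) (APow i M Op) = APow (Suc i) M Op"
  proof (rule set_eqI, rule iffI)
    fix x assume "x \<in> lconc (APow 1 M Op) (APow i M Op)"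
    then obtain v1 v2 where "v1 \<in> APow 1 M Op" "v2 \<in> APow i M Op" "x = uconc v1 v2"
      by (auto simp: lconc_mem)
    then have h: "\<And>a. x a = v1 a + v2 a" "\<forall>a\<in>M. v1 a = 1" "\<forall>a\<in>M. v2 a = i"
      "\<forall>a\<in>Op. v1 a \<le> 1" "\<forall>a\<in>Op. v2 a \<le> i" "\<forall>a. a \<notin> M \<and> a \<notin> Op \<longrightarrow> v1 a = 0"
      "\<forall>a. a \<notin> M \<and> a \<notin> Op \<longrightarrow> v2 a = 0"
      by (auto simp: APow_def uconc_apply)
    have "(\<forall>a\<in>M. x a = Suc i) \<and> (\<forall>a\<in>Op. x a \<le> Suc i) \<and> (\<forall>a. a \<notin> M \<and> a \<notin> Op \<longrightarrow> x a = 0)"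
    proof (intro conjI ballI allI impI)
      fix a assume "a \<in> M" then show "x a = Suc i" using h by simp
    next
      fix a assume "a \<in> Op" then show "x a \<le> Suc i" using h(1,4,5) by (metis add_le_mono plus_1_eq_Suc)
    next
      fix a assume "a \<notin> M \<and> a \<notin> Op" then show "x a = 0" using h by simp
    qed
    then show "x \<in> APow (Suc i) M Op" unfolding APow_def by blast
  next
    fix x assume x: "x \<in> APow (Suc i) M Op"
    define v1 where "v1 = (\<lambda>a. if a \<in> M then 1 else if a \<in> Op then min 1 (x a) else (0::nat))"
    define v2 where "v2 = (\<lambda>a. x a - v1 a)"
    have "v1 \<in> APow 1 M Op" by (auto simp: APow_def v1_def)
    moreover have "v2 \<in> APow i M Op" using x by (auto simp: APow_def v1_def v2_def)
    moreover have "x = uconc v1 v2" using x by (auto simp: APow_def v1_def v2_def uconc_def fun_eq_iff)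
    ultimately show "x \<in> lconc (APow 1 M Op) (APow i M Op)" by (auto simp: lconc_mem)
  qed
  then show ?case using Suc by simp
qed

lemma lpow_APow': "lpow i (APow (Suc 0) M Op) = APow i M Op"
  using lpow_APow[of i M Op] by simp

lemma enat_le1: "(enat i \<le> 1) = (i \<le> 1)" by (simp add: one_enat_def)

lemma lang_Mult_one: "lang (Mult E iv_one) = lang E"
proof -
  have "{w. \<exists>i. 1 \<le> i \<and> enat i \<le> 1 \<and> w \<in> lpow i (lang E)} = lpow 1 (lang E)"
  proof (rule set_eqI, rule iffI)
    fix w assume "w \<in> {w. \<exists>i. 1 \<le> i \<and> enat i \<le> 1 \<and> w \<in> lpow i (lang E)}"
    then obtain i where "1 \<le> i" "i \<le> 1" "w \<in> lpow i (lang E)" unfolding enat_le1 by blast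
    then show "w \<in> lpow 1 (lang E)" using le_antisym by metis
  next
    fix w assume "w \<in> lpow 1 (lang E)" then show "w \<in> {w. \<exists>i. 1 \<le> i \<and> enat i \<le> 1 \<and> w \<in> lpow i (lang E)}"
      unfolding enat_le1 by blast
  qed
  then show ?thesis unfolding iv_one_def lpow_one by simp
qed

lemma lang_Mult_opt: "lang (Mult E iv_opt) = insert uempty (lang E)"
proof -
  have "{w. \<exists>i. 0 \<le> i \<and> enat i \<le> 1 \<and> w \<in> lpow i (lang E)} = lpow 0 (lang E) \<union> lpow 1 (lang E)"
  proof (rule set_eqI, rule iffI)
    fix w assume "w \<in> {w. \<exists>i. 0 \<le> i \<and> enat i \<le> 1 \<and> w \<in> lpow i (lang E)}"
    then obtain i where "i \<le> 1" "w \<in> lpow i (lang E)" unfolding enat_le1 by blast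
    moreover have "i = 0 \<or> i = 1" using \<open>i \<le> 1\<close> by linarith
    ultimately show "w \<in> lpow 0 (lang E) \<union> lpow 1 (lang E)" by blast
  next
    fix w assume "w \<in> lpow 0 (lang E) \<union> lpow 1 (lang E)" then show "w \<in> {w. \<exists>i. 0 \<le> i \<and> enat i \<le> 1 \<and> w \<in> lpow i (lang E)}"
      unfolding enat_le1 by (metis (mono_tags, lifting) Un_iff le_numeral_extra(3,4) mem_Collect_eq zero_le)
  qed
  then show ?thesis unfolding iv_opt_def lpow_one by (simp only: lang.simps if_False Un_empty_right) simp
qed

lemma iv_opt_one: "iv_opt \<noteq> iv_one" by (simp add: iv_opt_def iv_one_def)

definition aM :: "('a \<times> interval) list \<Rightarrow> 'a set" where "aM ys = {a. (a, iv_one) \<in> set ys}"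
definition aO :: "('a \<times> interval) list \<Rightarrow> 'a set" where "aO ys = {a. (a, iv_opt) \<in> set ys}"

definition dlt :: "'a \<Rightarrow> 'a uword" where "dlt a = (\<lambda>b. if b = a then 1 else 0)"

lemma ins_M: assumes "a \<notin> M" "a \<notin> Op"
  shows "lconc {dlt a} (APow 1 M Op) = APow 1 (insert a M) Op"
proof (rule set_eqI, rule iffI)
  fix x assume "x \<in> lconc {dlt a} (APow 1 M Op)"
  then obtain v where "v \<in> APow 1 M Op" "x = uconc (dlt a) v" by (auto simp: lconc_mem)
  then show "x \<in> APow 1 (insert a M) Op" using assms by (auto simp: APow_def uconc_apply dlt_def)
next
  fix x assume x: "x \<in> APow 1 (insert a M) Op"
  let ?v = "x(a := 0)"
  have "?v \<in> APow 1 M Op" using x assms by (auto simp: APow_def)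
  moreover have "x = uconc (dlt a) ?v" using x by (auto simp: APow_def uconc_def dlt_def fun_eq_iff)
  ultimately show "x \<in> lconc {dlt a} (APow 1 M Op)" by (auto simp: lconc_mem)
qed

lemma ins_O: assumes "a \<notin> M" "a \<notin> Op"
  shows "lconc (insert uempty {dlt a}) (APow 1 M Op) = APow 1 M (insert a Op)"
proof (rule set_eqI, rule iffI)
  fix x assume "x \<in> lconc (insert uempty {dlt a}) (APow 1 M Op)"
  then obtain u v where "u \<in> insert uempty {dlt a}" "v \<in> APow 1 M Op" "x = uconc u v" unfolding lconc_mem by blast
  then show "x \<in> APow 1 M (insert a Op)" using assms by (auto simp: APow_def uconc_apply dlt_def uempty_apply)
next
  fix x assume x: "x \<in> APow 1 M (insert a Op)"
  let ?v = "x(a := 0)"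
  let ?u = "if x a = 0 then uempty else dlt a"
  have "?v \<in> APow 1 M Op" using x assms by (auto simp: APow_def)
  moreover have "x = uconc ?u ?v" using x by (auto simp: APow_def uconc_def dlt_def fun_eq_iff uempty_apply)
  moreover have "?u \<in> insert uempty {dlt a}" by simp
  ultimately show "x \<in> lconc (insert uempty {dlt a}) (APow 1 M Op)" unfolding lconc_mem by blast
qed

lemma syms_atom: "syms (Conc (map (\<lambda>(a, I). Mult (Sym a) I) ys)) = map fst ys"
  by (induction ys) auto

lemma atom_set: "\<forall>(a, I)\<in>set ys. I \<in> {iv_opt, iv_one} \<Longrightarrow> set (map fst ys) = aM ys \<union> aO ys"
  by (force simp: aM_def aO_def)

lemma atom_lang:
  assumes "\<forall>(a, I)\<in>set ys. I \<in> {iv_opt, iv_one}" "distinct (map fst ys)"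
  shows "lang (Conc (map (\<lambda>(a, I). Mult (Sym a) I) ys)) = APow 1 (aM ys) (aO ys)"
  using assms
proof (induction ys)
  case Nil
  show ?case by (auto simp: APow_def aM_def aO_def uempty_iff uempty_apply)
next
  case (Cons p ys)
  obtain a I where p: "p = (a, I)" by fastforce
  have IH: "lang (Conc (map (\<lambda>(a, I). Mult (Sym a) I) ys)) = APow 1 (aM ys) (aO ys)"
    using Cons by simp
  have na: "a \<notin> aM ys" "a \<notin> aO ys" using Cons.prems(2) p by (force simp: aM_def aO_def)+
  have L: "lang (Conc (map (\<lambda>(a, I). Mult (Sym a) I) (p # ys))) = lconc (lang (Mult (Sym a) I)) (APow 1 (aM ys) (aO ys))"
    using IH p by simp
  have sa: "lang (Sym a) = {dlt a}" by (simp add: dlt_def)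
  have "I = iv_one \<or> I = iv_opt" using Cons.prems(1) p by auto
  then show ?case
  proof
    assume I: "I = iv_one"
    have "aM (p # ys) = insert a (aM ys)" "aO (p # ys) = aO ys" using p I iv_opt_one by (auto simp: aM_def aO_def)
    moreover have "lang (Mult (Sym a) I) = {dlt a}" unfolding I lang_Mult_one by (simp add: dlt_def)
    ultimately show ?thesis using L ins_M[OF na] by simp
  next
    assume I: "I = iv_opt"
    have "aM (p # ys) = aM ys" "aO (p # ys) = insert a (aO ys)" using p I iv_opt_one by (auto simp: aM_def aO_def)
    moreover have "lang (Mult (Sym a) I) = insert uempty {dlt a}" unfolding I lang_Mult_opt by (simp add: dlt_def)
    ultimately show ?thesis using L ins_O[OF na] by simp
  qed
qed

lemma lang_nz: "v \<in> lang E \<Longrightarrow> v b \<noteq> 0 \<Longrightarrow> b \<in> set (syms E)"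
  using lang_supp[of E] unfolding supp_def by metis

lemma distinct_concat_unique:
  "distinct (concat (map g xs)) \<Longrightarrow> x \<in> set xs \<Longrightarrow> y \<in> set xs \<Longrightarrow> a \<in> set (g x) \<Longrightarrow> a \<in> set (g y) \<Longrightarrow> x = y"
proof (induction xs)
  case Nil then show ?case by simp
next
  case (Cons z zs)
  have d: "distinct (concat (map g zs))" "set (g z) \<inter> set (concat (map g zs)) = {}" using Cons.prems(1) by auto
  show ?case
  proof (cases "x = z")
    case True
    show ?thesis
    proof (cases "y = z")
      case False
      then have "y \<in> set zs" using Cons.prems(3) by simp
      then have "a \<in> set (concat (map g zs))" using Cons.prems(5) by auto
      then show ?thesis using d(2) Cons.prems(4) True by blast
    qed (simp add: True)
  next
    case False
    then have x: "x \<in> set zs" using Cons.prems(2) by simp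
    show ?thesis
    proof (cases "y = z")
      case True
      have "a \<in> set (concat (map g zs))" using x Cons.prems(4) by auto
      then show ?thesis using d(2) Cons.prems(5) True by blast
    next
      case False
      then have "y \<in> set zs" using Cons.prems(3) by simp
      then show ?thesis using Cons.IH[OF d(1) x] Cons.prems(4,5) by blast
    qed
  qed
qed

lemma distinct_concat_elem: "distinct (concat (map g xs)) \<Longrightarrow> x \<in> set xs \<Longrightarrow> distinct (g x)"
  by (induction xs) auto

lemma branch:
  assumes "distinct (concat (map syms Bs))" "v \<in> lang (Disj Bs)" "B \<in> set Bs" "b \<in> set (syms B)" "v b \<noteq> 0"
  shows "v \<in> lang B"
proof -
  have "v \<in> (\<Union>E\<in>set Bs. lang E)" using assms(2) by (simp only: lang.simps)
  then obtain B' where B': "B' \<in> set Bs" "v \<in> lang B'" by blast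
  have "b \<in> set (syms B')"
  proof (rule ccontr)
    assume "b \<notin> set (syms B')"
    then have "v b = 0" using lang_supp[of B'] B'(2) unfolding supp_def by blast
    then show False using assms(5) by simp
  qed
  then have "B' = B" using distinct_concat_unique[OF assms(1) B'(1) assms(3)] assms(4) by blast
  then show ?thesis using B' by simp
qed

definition gd :: "'a set \<Rightarrow> 'a set \<Rightarrow> 'a uword \<Rightarrow> bool" where
  "gd M Op v \<longleftrightarrow> (\<forall>a\<in>M. \<forall>b\<in>M. v a = v b) \<and> (\<forall>a\<in>M. \<forall>c\<in>Op. v c \<le> v a)"

lemma gd_APow: "v \<in> APow i M Op \<Longrightarrow> gd M Op v"
  unfolding gd_def APow_def by auto

lemma gd_zero: "(\<And>b. b \<in> M \<union> Op \<Longrightarrow> v b = 0) \<Longrightarrow> gd M Op v"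
  unfolding gd_def by simp

lemma gd_uconc: assumes "gd M Op v1" "gd M Op v2" shows "gd M Op (uconc v1 v2)"
  unfolding gd_def
proof (intro conjI ballI)
  fix a b assume "a \<in> M" "b \<in> M"
  then have "v1 a = v1 b" "v2 a = v2 b" using assms unfolding gd_def by blast+
  then show "uconc v1 v2 a = uconc v1 v2 b" unfolding uconc_apply by simp
next
  fix a c assume "a \<in> M" "c \<in> Op"
  then have "v1 c \<le> v1 a" "v2 c \<le> v2 a" using assms unfolding gd_def by blast+
  then show "uconc v1 v2 c \<le> uconc v1 v2 a" unfolding uconc_apply by linarith
qed

lemma gd_lpow: "(\<And>v. v \<in> L \<Longrightarrow> gd M Op v) \<Longrightarrow> v \<in> lpow i L \<Longrightarrow> gd M Op v"
proof (induction i arbitrary: v)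
  case 0 then show ?case by (auto simp: gd_def uempty_apply)
next
  case (Suc i)
  then obtain x y where "x \<in> L" "y \<in> lpow i L" "v = uconc x y" by (auto simp: lconc_mem)
  then show ?case using Suc.IH[of y] Suc.prems(1) gd_uconc[of M Op x y] by simp
qed

lemma atom_info:
  assumes "is_atom A" "distinct (syms A)"
  obtains M Op where "lang A = APow 1 M Op" "set (syms A) = M \<union> Op"
proof -
  obtain ys where ys: "A = Conc (map (\<lambda>(a, I). Mult (Sym a) I) ys)" "\<forall>(a, I)\<in>set ys. I \<in> {iv_opt, iv_one}"
    using assms(1) unfolding is_atom_def by blast
  have sy: "syms A = map fst ys" using ys(1) syms_atom by simp
  have d: "distinct (map fst ys)" using assms(2) sy by simp
  have "lang A = APow 1 (aM ys) (aO ys)" using atom_lang[OF ys(2) d] ys(1) by simp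
  moreover have "set (syms A) = aM ys \<union> aO ys" using atom_set[OF ys(2)] sy by simp
  ultimately show ?thesis using that by blast
qed

lemma clause_case:
  fixes u :: "'a::finite uword"
  assumes Bs: "Bs = map (\<lambda>(A, J). Mult A J) cs" and at: "\<forall>(A, J)\<in>set cs. is_atom A"
    and dis: "distinct (concat (map syms Bs))"
    and L1: "lang (Disj Bs) \<subseteq> L'" and L2: "L' \<subseteq> insert uempty (lang (Disj Bs))"
    and s: "satL L' u"
  shows "u \<in> L'"
proof (cases "u = uempty")
  case True then show ?thesis using satL_empty s by simp
next
  case False
  then obtain a where ua: "u a \<noteq> 0" by (auto simp: uempty_iff)
  obtain v where v: "v \<in> L'" "v a = u a" using satL_N[OF s] by blast
  then have "v \<noteq> uempty" using ua by (auto simp: uempty_apply)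
  then have "v \<in> lang (Disj Bs)" using v L2 by auto
  then obtain B where B: "B \<in> set Bs" "v \<in> lang B" by auto
  then obtain A J where AJ: "(A, J) \<in> set cs" "B = Mult A J" using Bs by auto
  have aB: "a \<in> set (syms B)" using lang_nz[OF B(2)] v ua by simp
  have dB: "distinct (syms B)" using distinct_concat_elem[OF _ B(1), of syms] dis by simp
  have dA: "distinct (syms A)" using dB AJ by simp
  obtain M Op where langA: "lang A = APow 1 M Op" and symsA: "set (syms A) = M \<union> Op"
    using atom_info[of A] at AJ(1) dA by blast
  have symsB: "set (syms B) = M \<union> Op" using symsA AJ by simp
  obtain n m q where J: "J = Intv n m q" by (cases J)
  have LB: "lang B = {w. \<exists>i. n \<le> i \<and> enat i \<le> m \<and> w \<in> APow i M Op} \<union> (if q then {uempty} else {})"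
    using J langA AJ by (simp add: lpow_APow')
  have BR: "v' \<in> lang B" if "v' \<in> L'" "b \<in> M \<union> Op" "v' b \<noteq> 0" for v' b
  proof -
    have "v' \<noteq> uempty" using that by (auto simp: uempty_apply)
    then have "v' \<in> lang (Disj Bs)" using that L2 by auto
    then show ?thesis using branch[OF dis _ B(1)] symsB that by blast
  qed
  have LBe: "v' = uempty \<or> (\<exists>i. n \<le> i \<and> enat i \<le> m \<and> v' \<in> APow i M Op)" if "v' \<in> lang B" for v'
    using that LB by (auto split: if_splits)
  have GD: "gd M Op v'" if vL: "v' \<in> L'" for v'
  proof (cases "\<forall>b\<in>M \<union> Op. v' b = 0")
    case True then show ?thesis by (intro gd_zero) (use True in simp)
  next
    case False
    then obtain b where b: "b \<in> M \<union> Op" "v' b \<noteq> 0" by auto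
    have "v' \<in> lang B" by (rule BR[OF vL b])
    then have "v' = uempty \<or> (\<exists>i. n \<le> i \<and> enat i \<le> m \<and> v' \<in> APow i M Op)" by (rule LBe)
    then show ?thesis
    proof
      assume "v' = uempty" then show ?thesis by (intro gd_zero) (simp add: uempty_apply)
    next
      assume "\<exists>i. n \<le> i \<and> enat i \<le> m \<and> v' \<in> APow i M Op"
      then obtain i where "v' \<in> APow i M Op" by auto
      then show ?thesis by (rule gd_APow)
    qed
  qed
  have aMO: "a \<in> M \<union> Op" using aB symsB by simp
  have supp_u: "u b = 0" if bn: "b \<notin> M \<union> Op" for b
  proof (rule ccontr)
    assume ub: "u b \<noteq> 0"
    have "\<not> (v' a \<noteq> 0 \<and> v' b \<noteq> 0)" if vL: "v' \<in> L'" for v'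
    proof
      assume ab: "v' a \<noteq> 0 \<and> v' b \<noteq> 0"
      then have "v' a \<noteq> 0" "v' b \<noteq> 0" by auto
      have "v' \<in> lang B" by (rule BR[OF vL aMO \<open>v' a \<noteq> 0\<close>])
      then have "b \<in> set (syms B)" by (rule lang_nz) (rule \<open>v' b \<noteq> 0\<close>)
      then show False using bn symsB by simp
    qed
    then have "\<not> (u a \<noteq> 0 \<and> u b \<noteq> 0)" by (rule satL_C[OF s])
    then show False using ua ub by simp
  qed
  have Ku: "u c \<le> u d" if "\<And>v'. v' \<in> L' \<Longrightarrow> v' c \<le> v' d" for c d
    using satL_K[OF s] that by blast
  have gdu1: "u c = u d" if cd: "c \<in> M" "d \<in> M" for c d
  proof -
    have eq: "v' c = v' d" if "v' \<in> L'" for v' using GD[OF that] cd unfolding gd_def by blast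
    have "u c \<le> u d" by (rule Ku) (simp add: eq)
    moreover have "u d \<le> u c" by (rule Ku) (simp add: eq)
    ultimately show ?thesis by simp
  qed
  have gdu2: "u c \<le> u d" if cd: "d \<in> M" "c \<in> Op" for c d
  proof -
    have "v' c \<le> v' d" if "v' \<in> L'" for v' using GD[OF that] cd unfolding gd_def by blast
    then show ?thesis by (rule Ku)
  qed
  have in_range: "\<exists>i. n \<le> i \<and> enat i \<le> m \<and> v' b \<le> i \<and> (b \<in> M \<longrightarrow> v' b = i)"
    if "v' \<in> L'" "b \<in> M \<union> Op" "v' b \<noteq> 0" for v' b
  proof -
    have "v' \<in> lang B" using BR that by blast
    moreover have "v' \<noteq> uempty" using that by (auto simp: uempty_apply)
    ultimately obtain i where "n \<le> i" "enat i \<le> m" "v' \<in> APow i M Op" using LBe by blast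
    then show ?thesis using that(2) unfolding APow_def by auto
  qed
  obtain c where c: "n \<le> c" "enat c \<le> m" "u \<in> APow c M Op"
  proof (cases "M = {}")
    case False
    then obtain m0 where m0: "m0 \<in> M" by blast
    have "u a \<le> u m0" using aMO gdu1[OF _ m0] gdu2[OF m0] by (metis Un_iff order.refl)
    then have um0: "u m0 \<noteq> 0" using ua by linarith
    obtain v' where v': "v' \<in> L'" "v' m0 = u m0" using satL_N[OF s] by blast
    obtain i where i: "n \<le> i" "enat i \<le> m" "v' m0 = i"
      using in_range[OF v'(1), of m0] m0 um0 v'(2) by auto
    have "u \<in> APow (u m0) M Op"
      unfolding APow_def
    proof (intro CollectI conjI ballI allI impI)
      fix b assume "b \<in> M" then show "u b = u m0" using gdu1[OF _ m0] by blast
    next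
      fix b assume "b \<in> Op" then show "u b \<le> u m0" using gdu2[OF m0] by blast
    next
      fix b assume "b \<notin> M \<and> b \<notin> Op" then show "u b = 0" using supp_u by blast
    qed
    then show ?thesis using that i v'(2) by metis
  next
    case True
    have bound: "enat (u b) \<le> m" if bO: "b \<in> Op" for b
    proof (cases "u b = 0")
      case True then show ?thesis by (simp add: zero_enat_def[symmetric])
    next
      case False
      obtain v' where v': "v' \<in> L'" "v' b = u b" using satL_N[OF s] by blast
      obtain i where "enat i \<le> m" "v' b \<le> i" using in_range[OF v'(1), of b] bO False v'(2) by auto
      then show ?thesis using v'(2) by (metis enat_ord_simps(1) order.trans)
    qed
    obtain i where i: "n \<le> i" "enat i \<le> m" using in_range[OF v(1) aMO] ua v(2) by auto
    have nm: "enat n \<le> m" using i by (metis enat_ord_simps(1) order.trans)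
    show ?thesis
    proof (cases m)
      case (enat k)
      have "u \<in> APow k M Op" unfolding APow_def using True supp_u bound enat by auto
      then show ?thesis using that[of k] nm enat by simp
    next
      case infinity
      let ?c = "max n (sum u Op)"
      have "u b \<le> ?c" if "b \<in> Op" for b
        using member_le_sum[of b Op u] that finite by (metis max.coboundedI2 finite_subset subset_UNIV zero_le)
      then have "u \<in> APow ?c M Op" unfolding APow_def using True supp_u by auto
      then show ?thesis using that[of ?c] infinity by simp
    qed
  qed
  have "u \<in> lang B" using LB c by blast
  then show ?thesis using B(1) L1 by auto
qed

lemma restr_union: "X \<inter> T = {} \<Longrightarrow> restr (X \<union> T) u = uconc (restr X u) (restr T u)"
  by (auto simp: restr_def uconc_def fun_eq_iff)

lemma restr_concat:
  assumes "\<forall>B\<in>set Bs. restr (set (syms B)) u \<in> S" "uempty \<in> S"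
    "\<And>x y. x \<in> S \<Longrightarrow> y \<in> S \<Longrightarrow> uconc x y \<in> S" "distinct (concat (map syms Bs))"
  shows "restr (set (concat (map syms Bs))) u \<in> S"
  using assms
proof (induction Bs)
  case Nil
  have "restr {} u = uempty" by (simp add: restr_def uempty_def)
  then show ?case using Nil by simp
next
  case (Cons B Bs)
  have dj: "set (syms B) \<inter> set (concat (map syms Bs)) = {}" using Cons.prems(4) by simp
  have "restr (set (concat (map syms Bs))) u \<in> S" using Cons by simp
  moreover have "restr (set (syms B)) u \<in> S" using Cons.prems(1) by simp
  ultimately have "uconc (restr (set (syms B)) u) (restr (set (concat (map syms Bs))) u) \<in> S"
    using Cons.prems(3) by blast
  then show ?case using restr_union[OF dj, of u] by simp
qed

lemma simple_case:
  fixes u :: "'a::finite uword"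
  assumes Bs: "Bs = map (\<lambda>(A, J). Mult A J) cs" and at: "\<forall>(A, J)\<in>set cs. is_atom A \<and> J \<in> {iv_opt, iv_one}"
    and dis: "distinct (concat (map syms Bs))"
    and L2: "L' \<subseteq> Sst" and Sst: "Sst = {w. \<exists>i. w \<in> lpow i (lang (Disj Bs))}"
    and s: "satL L' u"
  shows "u \<in> Sst"
proof -
  have cl: "uconc x y \<in> Sst" if xy: "x \<in> Sst" "y \<in> Sst" for x y
  proof -
    obtain i j where "x \<in> lpow i (lang (Disj Bs))" "y \<in> lpow j (lang (Disj Bs))" using xy Sst by auto
    then have "uconc x y \<in> lpow (i + j) (lang (Disj Bs))" by (rule lpow_add)
    then show ?thesis using Sst by auto
  qed
  have em: "uempty \<in> Sst" using Sst lpow.simps(1) by blast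
  have suppS: "v b = 0" if vS: "v \<in> Sst" and b: "b \<notin> set (syms (Disj Bs))" for v b
  proof -
    obtain i where "v \<in> lpow i (lang (Disj Bs))" using vS Sst by auto
    moreover have "supp (lpow i (lang (Disj Bs))) (set (syms (Disj Bs)))" by (rule supp_lpow[OF lang_supp])
    ultimately show ?thesis using b unfolding supp_def by metis
  qed
  have usupp: "u b = 0" if b: "b \<notin> set (syms (Disj Bs))" for b
  proof -
    obtain v where v: "v \<in> L'" "v b = u b" using satL_N[OF s] by blast
    then have "v \<in> Sst" using L2 by blast
    then have "v b = 0" by (rule suppS[OF _ b])
    then show ?thesis using v(2) by simp
  qed
  have sub: "lpow i (lang B) \<subseteq> Sst" if "B \<in> set Bs" for B i
  proof -
    have "lang B \<subseteq> lang (Disj Bs)" using that by auto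
    then have "lpow i (lang B) \<subseteq> lpow i (lang (Disj Bs))" by (rule lpow_mono)
    then show ?thesis using Sst by auto
  qed
  have Ku: "u c \<le> u d" if "\<And>v'. v' \<in> L' \<Longrightarrow> v' c \<le> v' d" for c d
    using satL_K[OF s] that by blast
  have piece: "restr (set (syms B)) u \<in> Sst" if Bin: "B \<in> set Bs" for B
  proof -
    obtain A J where AJ: "(A, J) \<in> set cs" "B = Mult A J" using Bin Bs by auto
    have atA: "is_atom A" "J \<in> {iv_opt, iv_one}" using at AJ(1) by auto
    have dB: "distinct (syms B)" using distinct_concat_elem[OF _ Bin, of syms] dis by simp
    have dA: "distinct (syms A)" using dB AJ by simp
    obtain M Op where langA: "lang A = APow 1 M Op" and symsA: "set (syms A) = M \<union> Op"
      using atom_info[OF atA(1) dA] by blast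
    have symsB: "set (syms B) = M \<union> Op" using symsA AJ by simp
    have LB: "lang B \<subseteq> insert uempty (lang A) \<and> lang A \<subseteq> lang B"
    proof (cases "J = iv_one")
      case True
      have "lang B = lang A" unfolding AJ(2) True by (rule lang_Mult_one)
      then show ?thesis by blast
    next
      case False
      then have "J = iv_opt" using atA(2) by blast
      then have "lang B = insert uempty (lang A)" unfolding AJ(2) by (simp only: lang_Mult_opt)
      then show ?thesis by blast
    qed
    have LBe: "v = uempty \<or> v \<in> APow 1 M Op" if "v \<in> lang B" for v
      using that LB langA by blast
    have AB: "lang A \<subseteq> lang B" using LB by blast
    have GD0: "gd M Op v" if vD: "v \<in> lang (Disj Bs)" for v
    proof (cases "\<forall>b\<in>M \<union> Op. v b = 0")
      case True then show ?thesis by (intro gd_zero) (use True in simp)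
    next
      case False
      then obtain b where b: "b \<in> M \<union> Op" "v b \<noteq> 0" by auto
      have "v \<in> lang B" using branch[OF dis vD Bin _ b(2)] b(1) symsB by simp
      then have "v = uempty \<or> v \<in> APow 1 M Op" by (rule LBe)
      then show ?thesis
      proof
        assume "v = uempty" then show ?thesis by (intro gd_zero) (simp add: uempty_apply)
      next
        assume "v \<in> APow 1 M Op" then show ?thesis by (rule gd_APow)
      qed
    qed
    have GD: "gd M Op v" if vL: "v \<in> L'" for v
    proof -
      obtain i where "v \<in> lpow i (lang (Disj Bs))" using vL L2 Sst by auto
      moreover have "\<And>v. v \<in> lang (Disj Bs) \<Longrightarrow> gd M Op v" by (rule GD0)
      ultimately show ?thesis using gd_lpow[of "lang (Disj Bs)" M Op v i] by blast
    qed
    have gdu1: "u c = u d" if cd: "c \<in> M" "d \<in> M" for c d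
    proof -
      have eq: "v' c = v' d" if "v' \<in> L'" for v' using GD[OF that] cd unfolding gd_def by blast
      have "u c \<le> u d" by (rule Ku) (simp add: eq)
      moreover have "u d \<le> u c" by (rule Ku) (simp add: eq)
      ultimately show ?thesis by simp
    qed
    have gdu2: "u c \<le> u d" if cd: "d \<in> M" "c \<in> Op" for c d
    proof -
      have "v' c \<le> v' d" if "v' \<in> L'" for v' using GD[OF that] cd unfolding gd_def by blast
      then show ?thesis by (rule Ku)
    qed
    define c where "c = (if M = {} then sum u Op else u (SOME m. m \<in> M))"
    have "restr (set (syms B)) u \<in> APow c M Op"
      unfolding APow_def
    proof (intro CollectI conjI ballI allI impI)
      fix b assume bM: "b \<in> M"
      then have "M \<noteq> {}" by auto
      then have c: "c = u (SOME m. m \<in> M)" and sM: "(SOME m. m \<in> M) \<in> M"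
        using c_def some_in_eq by auto
      have "restr (set (syms B)) u b = u b" using bM symsB by (simp add: restr_def)
      also have "\<dots> = c" using gdu1[OF bM sM] c by simp
      finally show "restr (set (syms B)) u b = c" .
    next
      fix b assume bO: "b \<in> Op"
      have r: "restr (set (syms B)) u b = u b" using bO symsB by (simp add: restr_def)
      show "restr (set (syms B)) u b \<le> c"
      proof (cases "M = {}")
        case True
        have "u b \<le> sum u Op" by (rule member_le_sum) (use bO in auto)
        then show ?thesis using r True c_def by simp
      next
        case False
        then have c: "c = u (SOME m. m \<in> M)" and sM: "(SOME m. m \<in> M) \<in> M"
          using c_def some_in_eq by auto
        show ?thesis using gdu2[OF sM bO] r c by simp
      qed
    next
      fix b assume "b \<notin> M \<and> b \<notin> Op"
      then show "restr (set (syms B)) u b = 0" using symsB by (simp add: restr_def)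
    qed
    moreover have "APow c M Op = lpow c (lang A)" unfolding langA by (rule lpow_APow[symmetric])
    moreover have "lpow c (lang A) \<subseteq> lpow c (lang B)" by (rule lpow_mono[OF AB])
    ultimately show ?thesis using sub[OF Bin] by blast
  qed
  have "restr (set (concat (map syms Bs))) u \<in> Sst"
    by (rule restr_concat) (use piece em cl dis in auto)
  moreover have "restr (set (concat (map syms Bs))) u = u"
    using usupp by (auto simp: restr_def fun_eq_iff)
  ultimately show ?thesis by simp
qed

theorem lemma1:
  fixes E :: "'a::finite uexp" and w :: "'a \<Rightarrow> nat"
  assumes "is_dime E"
  shows "w \<in> lang E \<longleftrightarrow> sat w E"
proof
  assume "w \<in> lang E" then show "sat w E" unfolding sat_eq by (rule mem_satL)
next
  assume "sat w E" then have s: "satL (lang E) w" unfolding sat_eq .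
  obtain xs where xs: "E = Conc (map (\<lambda>(D, I). Mult D I) xs)"
    "\<forall>(D, I)\<in>set xs. (is_simple_clause D \<and> I \<in> {iv_plus, iv_star}) \<or> (is_clause D \<and> I \<in> {iv_one, iv_opt})"
    "distinct (syms E)"
    using assms unfolding is_dime_def by blast
  define Fs where "Fs = map (\<lambda>(D, I). Mult D I) xs"
  have EF: "E = Conc Fs" using xs(1) Fs_def by simp
  have dF: "distinct (concat (map syms Fs))" using xs(3) EF by simp
  have fac: "\<forall>F\<in>set Fs. \<forall>u. satL (lang F) u \<longrightarrow> u \<in> lang F"
  proof (intro ballI allI impI)
    fix F and u :: "'a uword" assume F: "F \<in> set Fs" and su: "satL (lang F) u"
    obtain D I where DI: "(D, I) \<in> set xs" "F = Mult D I" using F Fs_def by auto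
    have dD: "distinct (syms D)" using distinct_concat_elem[OF dF F] DI by simp
    have cases: "(is_simple_clause D \<and> I \<in> {iv_plus, iv_star}) \<or> (is_clause D \<and> I \<in> {iv_one, iv_opt})"
      using xs(2) DI(1) by blast
    show "u \<in> lang F"
    proof (cases "is_simple_clause D \<and> I \<in> {iv_plus, iv_star}")
      case True
      obtain cs where cs: "D = Disj (map (\<lambda>(A, I). Mult A I) cs)" "\<forall>(A, I)\<in>set cs. is_atom A \<and> I \<in> {iv_opt, iv_one}"
        using True unfolding is_simple_clause_def by blast
      define Bs where "Bs = map (\<lambda>(A, I). Mult A I) cs"
      have DB: "D = Disj Bs" using cs(1) Bs_def by simp
      have dB: "distinct (concat (map syms Bs))" using dD DB by simp
      define Sst where "Sst = {w. \<exists>i. w \<in> lpow i (lang (Disj Bs))}"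
      have plus: "lang (Mult D iv_plus) = {w. \<exists>i. 1 \<le> i \<and> w \<in> lpow i (lang (Disj Bs))}"
        unfolding iv_plus_def DB by simp
      have star: "lang (Mult D iv_star) = Sst"
        unfolding iv_star_def DB Sst_def by simp
      have LF: "lang F \<subseteq> Sst"
      proof (cases "I = iv_plus")
        case True then show ?thesis unfolding DI(2) True plus Sst_def by blast
      next
        case False then have Is: "I = iv_star" using \<open>is_simple_clause D \<and> I \<in> {iv_plus, iv_star}\<close> by blast
        show ?thesis unfolding DI(2) Is star by (rule order.refl)
      qed
      have uS: "u \<in> Sst" by (rule simple_case[OF Bs_def cs(2) dB LF Sst_def su])
      show ?thesis
      proof (cases "u = uempty")
        case True then show ?thesis using satL_empty su by simp
      next
        case False
        obtain i where i: "u \<in> lpow i (lang (Disj Bs))" using uS Sst_def by auto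
        have "i \<noteq> 0" using i False by (cases i) auto
        then have "1 \<le> i" by simp
        show ?thesis
        proof (cases "I = iv_plus")
          case True then show ?thesis unfolding DI(2) True plus using i \<open>1 \<le> i\<close> by blast
        next
          case False then have Is: "I = iv_star" using \<open>is_simple_clause D \<and> I \<in> {iv_plus, iv_star}\<close> by blast
          show ?thesis unfolding DI(2) Is star by (rule uS)
        qed
      qed
    next
      case False
      then have cl: "is_clause D" "I \<in> {iv_one, iv_opt}" using cases by blast+
      obtain cs where cs: "D = Disj (map (\<lambda>(A, I). Mult A I) cs)" "\<forall>(A, I)\<in>set cs. is_atom A"
        using cl(1) unfolding is_clause_def by blast
      define Bs where "Bs = map (\<lambda>(A, I). Mult A I) cs"
      have DB: "D = Disj Bs" using cs(1) Bs_def by simp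
      have dB: "distinct (concat (map syms Bs))" using dD DB by simp
      have LL: "lang (Disj Bs) \<subseteq> lang F \<and> lang F \<subseteq> insert uempty (lang (Disj Bs))"
      proof (cases "I = iv_one")
        case True
        have "lang F = lang (Disj Bs)" unfolding DI(2) True DB by (rule lang_Mult_one)
        then show ?thesis by blast
      next
        case False then have "I = iv_opt" using cl(2) by blast
        then have "lang F = insert uempty (lang (Disj Bs))" unfolding DI(2) DB by (simp only: lang_Mult_opt)
        then show ?thesis by blast
      qed
      show ?thesis using clause_case[OF Bs_def cs(2) dB _ _ su] LL by blast
    qed
  qed
  show "w \<in> lang E" using conc_closed[OF fac dF] s EF by simp
qed

end
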